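(* Let $n,m,q\ge 1$, let $\mathcal{X}\in\mathfrak{R}^n$ and let $f:\mathcal{X}\to\mathbb{R}^n$, $G:\mathcal{X}\to\mathbb{R}^{n\times m}$, $h:\mathcal{X}\to\mathbb{R}^q$ define the constrained system $\dot x=f(x)+G(x)u$, $y=h(x)$, $x\in\mathcal{X}$, $u\in\mathcal{U}\in\mathfrak{R}^m$. Put $\bar g(x)=\|G(x)G(x)^\intercal\|_\infty$ and assume $f(0)=0$, $h(0)=0$, $\bar g(0)=0$. Let $\Omega\in\mathfrak{R}^n$ with $\Omega\subseteq\mathcal{X}$, and let $\mathcal{T}=\{\sigma_i\}_{i=1}^{m_{\mathcal{T}}}$ be a triangulation of $\Omega$, $\sigma_i=\mathrm{co}(\{x_{i,j}\}_{j=0}^n)$, such that $f,G,h\in\mathcal{C}^2(\mathcal{T})$. For each $i$ let $\beta_i,\tilde\beta_i,\bar\beta_i$ be real numbers with $$\beta_i\ge\max_{p,q',r\in\mathbb{Z}_1^n}\max_{\xi\in\sigma_i}\Big|\tfrac{\partial^2 f^{(p)}}{\partial x^{(q')}\partial x^{(r)}}(\xi)\Big|,\quad \tilde\beta_i\ge\max_{q',r\in\mathbb{Z}_1^n}\max_{\xi\in\sigma_i}\Big|\tfrac{\partial^2 (h^\intercal h)}{\partial x^{(q')}\partial x^{(r)}}(\xi)\Big|,\quad \bar\beta_i\ge\max_{q',r\in\mathbb{Z}_1^n}\max_{\xi\in\sigma_i}\Big|\tfrac{\partial^2 \bar g}{\partial x^{(q')}\partial x^{(r)}}(\xi)\Big|$$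 (the indicated second derivatives being taken on $\sigma_i$), and for $j\in\mathbb{Z}_0^n$ let $$c_{i,j}=\tfrac{n}{2}\|x_{i,j}-x_{i,0}\|_2\big(\max_{k\in\mathbb{Z}_1^n}\|x_{i,k}-x_{i,0}\|_2+\|x_{i,j}-x_{i,0}\|_2\big).$$ For values $\mathbf{V}=\{V_x\}_{x\in\mathbb{E}_{\mathcal{T}}}\subset\mathbb{R}$, vectors $\mathbf{L}=\{l_i\}_{i=1}^{m_{\mathcal{T}}}\subset\mathbb{R}^n$ and scalars $b_1,\gamma$, define $$H_{i,j}=f(x_{i,j})^\intercal\nabla V_i+\tfrac12\|h(x_{i,j})\|_2^2+(1_n^\intercal l_i\,\beta_i+\tfrac12\tilde\beta_i)c_{i,j}+\tfrac{1}{2\gamma}\big(\bar g(x_{i,j})+\bar\beta_i c_{i,j}\big)(1_n^\intercal l_i)^2 .$$ Then there exist $\mathbf{V},\mathbf{L},b_1,\gamma$ satisfying (i) $\gamma>0$; (ii) $V_x\ge0$ for all $x\in\mathbb{E}_{\mathcal{T}}$; (iii) $|\nabla V_i|\le l_i$ (componentwise) for all $i\in\mathbb{Z}_1^{m_{\mathcal{T}}}$; (iv) $H_{i,j}\le -b_1$ for all $i\in\mathbb{Z}_1^{m_{\mathcal{T}}}$ and all $j\in\mathbb{Z}_0^n$ with $x_{i,j}\neq0$. If moreover such values satisfy $b_1>0$, then, with $V$ the CPA interpolation of $\mathbf{V}$ on $\mathcal{T}$, the Hamilton–Jacobi inequality $$\nabla V^\intercal f(x)+\tfrac{1}{2\gamma}\|G(x)^\intercal\nabla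 V\|_2^2+\tfrac12\|h(x)\|_2^2\le 0$$ holds for all $x\in\Omega^\circ$, where at a point $x\in\sigma_i$ the gradient $\nabla V$ is taken to be $\nabla V_i$.
   Context: $\mathfrak{R}^n$ denotes the set of compact $\Omega\subset\mathbb{R}^n$ whose interior $\Omega^\circ$ is connected and contains the origin and with $\Omega=\overline{\Omega^\circ}$. An $n$-simplex is the convex hull of $n+1$ affinely independent points (its vertices). A triangulation of $\Omega\in\mathfrak{R}^n$ is a finite collection $\mathcal{T}=\{\sigma_i\}$ of $n$-simplexes whose union is $\Omega$ and such that any two intersect in a common face or the empty set; $\mathbb{E}_{\mathcal{T}}$ is its set of vertices. Convention: the vertex labelled $x_{i,0}$ of $\sigma_i$ is arbitrary unless $0\in\sigma_i$, in which case $x_{i,0}=0$. A function is in $\mathcal{C}^2(\mathcal{T})$ if it is continuous and $\mathcal{C}^2$ on each simplex of $\mathcal{T}$ (for vector/matrix functions, componentwise). Given vertex values $\{V_x\}$, let $X_i\in\mathbb{R}^{n\times n}$ have $j$-th row $(x_{i,j}-x_{i,0})^\intercal$ and $\bar V_i\in\mathbb{R}^n$ have $j$-th entry $V_{x_{i,j}}-V_{x_{i,0}}$; then $\nabla V_i=X_i^{-1}\bar V_i$ and the CPA (continuous piecewise affine) interpolation $V$ is the unique function affine on each $\sigma_i$ with gradient $\nabla V_i$ there and $V(x)=V_x$ at every vertex. $\|A\|_\infty$ for a matrix is the induced $\infty$-norm; $1_n$ is the all-ones vector; $|v|$ for a vector is componentwise absolute value. *)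

theory Defs
  imports "HOL-Analysis.Analysis"
begin

definition region :: "('a::real_normed_vector) set \<Rightarrow> bool" where
  "region \<Omega> \<longleftrightarrow> compact \<Omega> \<and> connected (interior \<Omega>) \<and> 0 \<in> interior \<Omega>
      \<and> \<Omega> = closure (interior \<Omega>)"

definition ind_inf_norm :: "real^'c^'r \<Rightarrow> real" where
  "ind_inf_norm A = (SUP x\<in>{x::real^'c. infnorm x \<le> 1}. infnorm (A *v x))"

definition gbar :: "(real^'n \<Rightarrow> real^'m^'n) \<Rightarrow> real^'n \<Rightarrow> real" where
  "gbar G x = ind_inf_norm (G x ** transpose (G x))"

text \<open>Second-order differentiability on a set (derivatives taken within the set):
  \<open>D q\<close> is the partial derivative w.r.t. \<open>x\<^sup>(\<^sup>q\<^sup>)\<close>, \<open>D2 q r\<close> is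
  \<open>\<partial>\<^sup>2\<phi>/\<partial>x\<^sup>(\<^sup>r\<^sup>)\<partial>x\<^sup>(\<^sup>q\<^sup>)\<close>.\<close>
definition C2_witness :: "(real^'n) set \<Rightarrow> (real^'n \<Rightarrow> real) \<Rightarrow> ('n \<Rightarrow> real^'n \<Rightarrow> real)
    \<Rightarrow> ('n \<Rightarrow> 'n \<Rightarrow> real^'n \<Rightarrow> real) \<Rightarrow> bool" where
  "C2_witness S \<phi> D D2 \<longleftrightarrow>
     (\<forall>x\<in>S. (\<phi> has_derivative (\<lambda>v. \<Sum>q\<in>UNIV. D q x * v $ q)) (at x within S))
   \<and> (\<forall>q. \<forall>x\<in>S. (D q has_derivative (\<lambda>v. \<Sum>r\<in>UNIV. D2 q r x * v $ r)) (at x within S))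
   \<and> (\<forall>q r. continuous_on S (D2 q r))"

definition C2_on :: "(real^'n) set \<Rightarrow> (real^'n \<Rightarrow> real) \<Rightarrow> bool" where
  "C2_on S \<phi> \<longleftrightarrow> (\<exists>D D2. C2_witness S \<phi> D D2)"

definition C2_bounded :: "(real^'n) set \<Rightarrow> (real^'n \<Rightarrow> real) \<Rightarrow> real \<Rightarrow> bool" where
  "C2_bounded S \<phi> b \<longleftrightarrow>
     (\<exists>D D2. C2_witness S \<phi> D D2 \<and> (\<forall>q r. \<forall>\<xi>\<in>S. \<bar>D2 q r \<xi>\<bar> \<le> b))"

text \<open>Labelled simplices: simplex \<open>i\<close> has vertex \<open>x0 i\<close> (= \<open>x\<^sub>i\<^sub>,\<^sub>0\<close>) and
  vertices \<open>X i k\<close> (= \<open>x\<^sub>i\<^sub>,\<^sub>k\<close>, \<open>k\<close> ranging over the n-element index type).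
  Vertex index \<open>None\<close> stands for \<open>j = 0\<close>, \<open>Some k\<close> for \<open>j = k\<close>.\<close>
definition vert :: "real^'n \<Rightarrow> ('n \<Rightarrow> real^'n) \<Rightarrow> 'n option \<Rightarrow> real^'n" where
  "vert x0 X j = (case j of None \<Rightarrow> x0 | Some k \<Rightarrow> X k)"

definition simplex_of :: "real^'n \<Rightarrow> ('n \<Rightarrow> real^'n) \<Rightarrow> (real^'n) set" where
  "simplex_of x0 X = convex hull (insert x0 (range X))"

definition is_nsimplex_data :: "real^'n \<Rightarrow> ('n \<Rightarrow> real^'n) \<Rightarrow> bool" where
  "is_nsimplex_data x0 X \<longleftrightarrow> inj X \<and> x0 \<notin> range X \<and> \<not> affine_dependent (insert x0 (range X))"

definition triangulation ::
    "(real^'n) set \<Rightarrow> nat \<Rightarrow> (nat \<Rightarrow> real^'n) \<Rightarrow> (nat \<Rightarrow> 'n \<Rightarrow> real^'n) \<Rightarrow> bool" where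
  "triangulation \<Omega> M x0 X \<longleftrightarrow>
     (\<forall>i<M. is_nsimplex_data (x0 i) (X i))
   \<and> (\<Union>i<M. simplex_of (x0 i) (X i)) = \<Omega>
   \<and> (\<forall>i<M. \<forall>k<M. i \<noteq> k \<longrightarrow> simplex_of (x0 i) (X i) \<noteq> simplex_of (x0 k) (X k))
   \<and> (\<forall>i<M. \<forall>k<M.
        (simplex_of (x0 i) (X i) \<inter> simplex_of (x0 k) (X k)) face_of simplex_of (x0 i) (X i)
      \<and> (simplex_of (x0 i) (X i) \<inter> simplex_of (x0 k) (X k)) face_of simplex_of (x0 k) (X k))
   \<and> (\<forall>i<M. 0 \<in> simplex_of (x0 i) (X i) \<longrightarrow> x0 i = 0)"

definition vertices_T :: "nat \<Rightarrow> (nat \<Rightarrow> real^'n) \<Rightarrow> (nat \<Rightarrow> 'n \<Rightarrow> real^'n) \<Rightarrow> (real^'n) set" where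
  "vertices_T M x0 X = {vert (x0 i) (X i) j | i j. i < M}"

definition cpa_grad :: "(real^'n \<Rightarrow> real) \<Rightarrow> real^'n \<Rightarrow> ('n \<Rightarrow> real^'n) \<Rightarrow> real^'n" where
  "cpa_grad V x0 X = matrix_inv (\<chi> j. X j - x0) *v (\<chi> j. V (X j) - V x0)"

definition c_coef :: "real^'n \<Rightarrow> ('n \<Rightarrow> real^'n) \<Rightarrow> 'n option \<Rightarrow> real" where
  "c_coef x0 X j = real CARD('n) / 2 * norm (vert x0 X j - x0)
      * (Max (range (\<lambda>k. norm (X k - x0))) + norm (vert x0 X j - x0))"

definition one_dot :: "real^'n \<Rightarrow> real" where
  "one_dot l = (\<Sum>k\<in>UNIV. l $ k)"

definition H_val ::
  "(real^'n \<Rightarrow> real^'n) \<Rightarrow> (real^'n \<Rightarrow> real^'m^'n) \<Rightarrow> (real^'n \<Rightarrow> real^'q)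
   \<Rightarrow> real \<Rightarrow> real \<Rightarrow> real \<Rightarrow> (real^'n \<Rightarrow> real) \<Rightarrow> real^'n \<Rightarrow> real
   \<Rightarrow> real^'n \<Rightarrow> ('n \<Rightarrow> real^'n) \<Rightarrow> 'n option \<Rightarrow> real" where
  "H_val f G h \<beta> \<beta>t \<beta>b V l \<gamma> x0 X j =
     f (vert x0 X j) \<bullet> cpa_grad V x0 X + 1/2 * (norm (h (vert x0 X j)))\<^sup>2
     + (one_dot l * \<beta> + 1/2 * \<beta>t) * c_coef x0 X j
     + 1 / (2 * \<gamma>) * (gbar G (vert x0 X j) + \<beta>b * c_coef x0 X j) * (one_dot l)\<^sup>2"

definition conds ::
  "(real^'n \<Rightarrow> real^'n) \<Rightarrow> (real^'n \<Rightarrow> real^'m^'n) \<Rightarrow> (real^'n \<Rightarrow> real^'q)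
   \<Rightarrow> nat \<Rightarrow> (nat \<Rightarrow> real^'n) \<Rightarrow> (nat \<Rightarrow> 'n \<Rightarrow> real^'n)
   \<Rightarrow> (nat \<Rightarrow> real) \<Rightarrow> (nat \<Rightarrow> real) \<Rightarrow> (nat \<Rightarrow> real)
   \<Rightarrow> (real^'n \<Rightarrow> real) \<Rightarrow> (nat \<Rightarrow> real^'n) \<Rightarrow> real \<Rightarrow> real \<Rightarrow> bool" where
  "conds f G h M x0 X \<beta> \<beta>t \<beta>b V L b1 \<gamma> \<longleftrightarrow>
     \<gamma> > 0
   \<and> (\<forall>x\<in>vertices_T M x0 X. V x \<ge> 0)
   \<and> (\<forall>i<M. \<forall>k. \<bar>cpa_grad V (x0 i) (X i) $ k\<bar> \<le> L i $ k)
   \<and> (\<forall>i<M. \<forall>j. vert (x0 i) (X i) j \<noteq> 0 \<longrightarrow>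
        H_val f G h (\<beta> i) (\<beta>t i) (\<beta>b i) V (L i) \<gamma> (x0 i) (X i) j \<le> - b1)"

end

theory Submission
  imports Defs
begin

lemma taylor1_upper:
  fixes \<phi> \<phi>1 \<phi>2 :: "real \<Rightarrow> real"
  assumes d1: "\<forall>t\<in>{0..1}. (\<phi> has_real_derivative \<phi>1 t) (at t within {0..1})"
    and d2: "\<forall>t\<in>{0..1}. (\<phi>1 has_real_derivative \<phi>2 t) (at t within {0..1})"
    and b: "\<forall>t\<in>{0..1}. \<phi>2 t \<le> K"
  shows "\<phi> 1 - \<phi> 0 - \<phi>1 0 \<le> K/2"
proof -
  define ch where "ch t = \<phi> t - t * \<phi>1 0 - K/2 * t^2" for t
  have "(ch has_real_derivative (\<phi>1 t - \<phi>1 0 - K * t)) (at t within {0..1})" if "t\<in>{0..1}" for t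
    unfolding ch_def using d1 that
    by (auto intro!: derivative_eq_intros)
  then have "\<exists>z\<in>{0..1}. ch 1 - ch 0 = (\<lambda>x h. h * (\<phi>1 x - \<phi>1 0 - K * x)) z (1 - 0)"
    apply (intro mvt_very_simple)
     apply simp
    by (simp add: has_field_derivative_def mult.commute[of _ "_ - _"])
  then obtain z where z: "z\<in>{0..1}" "ch 1 - ch 0 = \<phi>1 z - \<phi>1 0 - K * z" by auto
  have "\<exists>w\<in>{0..z}. \<phi>1 z - \<phi>1 0 = (\<lambda>x h. \<phi>2 x * h) w (z - 0)"
  proof (rule mvt_very_simple)
    show "0 \<le> z" using z by simp
    fix x assume "0 \<le> x" "x \<le> z"
    then have "(\<phi>1 has_real_derivative \<phi>2 x) (at x within {0..1})" using d2 z by auto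
    then have "(\<phi>1 has_real_derivative \<phi>2 x) (at x within {0..z})"
      by (rule DERIV_subset) (use z in auto)
    then show "(\<phi>1 has_derivative (\<lambda>h. \<phi>2 x * h)) (at x within {0..z})"
      by (simp add: has_field_derivative_def)
  qed
  then obtain w where w: "w\<in>{0..z}" "\<phi>1 z - \<phi>1 0 = \<phi>2 w * z" by auto
  have "\<phi>2 w \<le> K" using b w z by auto
  then have "z * \<phi>2 w \<le> z * K" using z by (auto intro: mult_left_mono)
  then have "ch 1 - ch 0 \<le> 0" using z w by (simp add: algebra_simps)
  then show ?thesis unfolding ch_def by simp
qed

lemma taylor1_abs:
  fixes \<phi> \<phi>1 \<phi>2 :: "real \<Rightarrow> real"
  assumes d1: "\<forall>t\<in>{0..1}. (\<phi> has_real_derivative \<phi>1 t) (at t within {0..1})"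
    and d2: "\<forall>t\<in>{0..1}. (\<phi>1 has_real_derivative \<phi>2 t) (at t within {0..1})"
    and b: "\<forall>t\<in>{0..1}. \<bar>\<phi>2 t\<bar> \<le> K"
  shows "\<bar>\<phi> 1 - \<phi> 0 - \<phi>1 0\<bar> \<le> K/2"
proof -
  have "\<phi> 1 - \<phi> 0 - \<phi>1 0 \<le> K/2"
    by (rule taylor1_upper[OF d1 d2]) (use b in auto)
  moreover
  have a1: "\<forall>t\<in>{0..1}. ((\<lambda>t. - \<phi> t) has_real_derivative - \<phi>1 t) (at t within {0..1})"
      using d1 by (auto intro!: derivative_eq_intros)
  have a2: "\<forall>t\<in>{0..1}. ((\<lambda>t. - \<phi>1 t) has_real_derivative (\<lambda>t. - \<phi>2 t) t) (at t within {0..1})"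
      using d2 by (auto intro!: derivative_eq_intros)
  have a3: "\<forall>t\<in>{0..1}. (\<lambda>t. - \<phi>2 t) t \<le> K" using b by force
  have "(\<lambda>t. - \<phi> t) 1 - (\<lambda>t. - \<phi> t) 0 - (\<lambda>t. - \<phi>1 t) 0 \<le> K/2"
    by (rule taylor1_upper[OF a1 a2 a3])
  ultimately show ?thesis unfolding abs_le_iff by (intro conjI; linarith)
qed

lemma c2_taylor:
  fixes g :: "real^'n \<Rightarrow> real"
  assumes cvx: "convex S" and w: "C2_witness S g D D2"
    and bnd: "\<forall>q r. \<forall>\<xi>\<in>S. \<bar>D2 q r \<xi>\<bar> \<le> B" and xS: "x\<in>S" and yS: "y\<in>S"
  shows "\<bar>g y - g x - (\<Sum>q\<in>UNIV. D q x * (y - x)$q)\<bar> \<le> B/2 * (\<Sum>q\<in>UNIV. \<bar>(y-x)$q\<bar>)^2"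
proof -
  define d where "d = y - x"
  define p where "p t = x + t *\<^sub>R d" for t :: real
  have pS: "p t \<in> S" if "t \<in> {0..1}" for t
  proof -
    have "p t = (1 - t) *\<^sub>R x + t *\<^sub>R y" unfolding p_def d_def by (simp add: algebra_simps)
    then show ?thesis using convexD[OF cvx xS yS, of "1-t" t] that by auto
  qed
  have pimg: "p ` {0..1} \<subseteq> S" using pS by auto
  have pd: "(p has_derivative (\<lambda>h. h *\<^sub>R d)) (at t within {0..1})" for t
    unfolding p_def by (auto intro!: derivative_eq_intros)
  from w have gd: "\<forall>x\<in>S. (g has_derivative (\<lambda>v. \<Sum>q\<in>UNIV. D q x * v $ q)) (at x within S)"
    and Dd: "\<forall>q. \<forall>x\<in>S. (D q has_derivative (\<lambda>v. \<Sum>r\<in>UNIV. D2 q r x * v $ r)) (at x within S)"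
    unfolding C2_witness_def by auto
  define \<phi> where "\<phi> t = g (p t)" for t
  define \<phi>1 where "\<phi>1 t = (\<Sum>q\<in>UNIV. D q (p t) * d $ q)" for t
  define \<phi>2 where "\<phi>2 t = (\<Sum>q\<in>UNIV. (\<Sum>r\<in>UNIV. D2 q r (p t) * d $ r) * d $ q)" for t
  have chain: "((f \<circ> p) has_derivative (\<lambda>h. f' (h *\<^sub>R d))) (at t within {0..1})"
    if "t \<in> {0..1}" "\<forall>x\<in>S. (f has_derivative f'' x) (at x within S)" "f' = f'' (p t)"
    for t and f :: "real^'n \<Rightarrow> real" and f' f''
  proof -
    have "(f has_derivative f') (at (p t) within S)" using that pS by auto
    then have "(f has_derivative f') (at (p t) within p ` {0..1})"
      by (rule has_derivative_subset) (rule pimg)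
    from diff_chain_within[OF pd this] show ?thesis by (simp add: o_def)
  qed
  have d1: "\<forall>t\<in>{0..1}. (\<phi> has_real_derivative \<phi>1 t) (at t within {0..1})"
  proof
    fix t :: real assume t: "t \<in> {0..1}"
    have "((g \<circ> p) has_derivative (\<lambda>h. (\<lambda>v. \<Sum>q\<in>UNIV. D q (p t) * v $ q) (h *\<^sub>R d))) (at t within {0..1})"
      by (rule chain[OF t gd]) simp
    then show "(\<phi> has_real_derivative \<phi>1 t) (at t within {0..1})"
      unfolding has_field_derivative_def \<phi>_def[abs_def] o_def
      by (rule has_derivative_eq_rhs) (auto simp: fun_eq_iff \<phi>1_def sum_distrib_left algebra_simps)
  qed
  have d2: "\<forall>t\<in>{0..1}. (\<phi>1 has_real_derivative \<phi>2 t) (at t within {0..1})"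
  proof
    fix t :: real assume t: "t \<in> {0..1}"
    have dq: "((\<lambda>t. D q (p t)) has_real_derivative (\<Sum>r\<in>UNIV. D2 q r (p t) * d $ r)) (at t within {0..1})" for q
    proof -
      have "((D q \<circ> p) has_derivative (\<lambda>h. (\<lambda>v. \<Sum>r\<in>UNIV. D2 q r (p t) * v $ r) (h *\<^sub>R d))) (at t within {0..1})"
        by (rule chain[OF t]) (use Dd in auto)
      then show ?thesis
        unfolding has_field_derivative_def o_def
        by (rule has_derivative_eq_rhs) (auto simp: fun_eq_iff sum_distrib_left algebra_simps)
    qed
    show "(\<phi>1 has_real_derivative \<phi>2 t) (at t within {0..1})"
      unfolding \<phi>1_def[abs_def] \<phi>2_def
      by (intro DERIV_sum DERIV_cmult_right dq)
  qed
  have b: "\<forall>t\<in>{0..1}. \<bar>\<phi>2 t\<bar> \<le> B * (\<Sum>q\<in>UNIV. \<bar>d$q\<bar>)^2"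
  proof
    fix t :: real assume t: "t \<in> {0..1}"
    have "\<bar>\<phi>2 t\<bar> \<le> (\<Sum>q\<in>UNIV. (\<Sum>r\<in>UNIV. \<bar>D2 q r (p t)\<bar> * \<bar>d $ r\<bar>) * \<bar>d $ q\<bar>)"
      unfolding \<phi>2_def
      by (rule order_trans[OF sum_abs], rule sum_mono)
         (auto simp: abs_mult intro!: mult_right_mono order_trans[OF sum_abs] sum_mono)
    also have "\<dots> \<le> (\<Sum>q\<in>UNIV. (\<Sum>r\<in>UNIV. B * \<bar>d $ r\<bar>) * \<bar>d $ q\<bar>)"
      using bnd pS[OF t]
      by (intro sum_mono mult_right_mono) (auto intro!: mult_right_mono)
    also have "\<dots> = B * (\<Sum>q\<in>UNIV. \<bar>d$q\<bar>)^2"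
      by (simp add: power2_eq_square sum_distrib_left sum_distrib_right algebra_simps)
    finally show "\<bar>\<phi>2 t\<bar> \<le> B * (\<Sum>q\<in>UNIV. \<bar>d$q\<bar>)^2" .
  qed
  have "\<bar>\<phi> 1 - \<phi> 0 - \<phi>1 0\<bar> \<le> B * (\<Sum>q\<in>UNIV. \<bar>d$q\<bar>)^2 / 2"
    by (rule taylor1_abs[OF d1 d2 b])
  then show ?thesis unfolding \<phi>_def \<phi>1_def p_def d_def by simp
qed

lemma inj_vert: assumes "is_nsimplex_data x0 X" shows "inj (vert x0 X)"
proof (rule injI)
  fix a b assume "vert x0 X a = vert x0 X b"
  with assms show "a = b" unfolding is_nsimplex_data_def vert_def
    by (cases a; cases b) (auto dest: injD)
qed

lemma range_vert: "range (vert x0 X) = insert x0 (range X)"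
proof -
  have "range (vert x0 X) = vert x0 X ` (insert None (range Some))"
    by (metis UNIV_option_conv)
  also have "\<dots> = insert x0 (range X)" by (auto simp: vert_def image_image)
  finally show ?thesis .
qed

lemma simplex_coords:
  assumes "is_nsimplex_data x0 X" "x \<in> simplex_of x0 X"
  shows "\<exists>l. (\<forall>j. l j \<ge> 0) \<and> sum l UNIV = 1 \<and> x = (\<Sum>j\<in>UNIV. l j *\<^sub>R vert x0 X j)"
proof -
  have fin: "finite (range (vert x0 X))" by simp
  from assms(2) obtain u where u: "\<forall>y\<in>range (vert x0 X). 0 \<le> u y"
    "sum u (range (vert x0 X)) = 1" "(\<Sum>y\<in>range (vert x0 X). u y *\<^sub>R y) = x"
    unfolding simplex_of_def range_vert[symmetric] convex_hull_finite[OF fin] by auto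
  have inj: "inj (vert x0 X)" by (rule inj_vert[OF assms(1)])
  show ?thesis
  proof (intro exI[of _ "\<lambda>j. u (vert x0 X j)"] conjI allI)
    show "\<And>j. 0 \<le> u (vert x0 X j)" using u(1) by auto
    show "(\<Sum>j\<in>UNIV. u (vert x0 X j)) = 1" using u(2) sum.reindex[OF inj, of u] by simp
    show "x = (\<Sum>j\<in>UNIV. u (vert x0 X j) *\<^sub>R vert x0 X j)"
      using u(3) sum.reindex[OF inj, of "\<lambda>y. u y *\<^sub>R y"] by simp
  qed
qed

lemma Max_norm_nonneg: "0 \<le> Max (range (\<lambda>k::'n::finite. norm (X k - x0 :: real^'n)))"
proof -
  obtain k :: 'n where True by simp
  have "norm (X k - x0) \<le> Max (range (\<lambda>k. norm (X k - x0)))" by (rule Max_ge) auto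
  then show ?thesis by (meson norm_ge_zero order_trans)
qed

lemma c_coef_ge: "real CARD('n) / 2 * (norm (vert x0 X j - x0))^2 \<le> c_coef x0 (X::'n::finite \<Rightarrow> real^'n) j"
proof -
  have "(norm (vert x0 X j - x0))^2 \<le> norm (vert x0 X j - x0) * (Max (range (\<lambda>k. norm (X k - x0))) + norm (vert x0 X j - x0))"
    using Max_norm_nonneg[of X x0] by (simp add: power2_eq_square algebra_simps)
  then show ?thesis unfolding c_coef_def
    by (simp add: mult.assoc mult_left_mono)
qed

lemma c_coef_nonneg: "0 \<le> c_coef x0 (X::'n::finite \<Rightarrow> real^'n) j"
  by (rule order_trans[OF _ c_coef_ge]) simp

lemma l1_sq_le: "(\<Sum>q\<in>UNIV. \<bar>(d::real^'n) $ q\<bar>)^2 \<le> real CARD('n) * (norm d)^2"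
proof -
  have "(\<Sum>q\<in>UNIV. \<bar>d $ q\<bar>)^2 \<le> (\<Sum>q\<in>UNIV. (\<bar>d $ q\<bar>)^2) * card (UNIV::'n set)"
    by (rule sum_squared_le_sum_of_squares)
  also have "(\<Sum>q\<in>UNIV. (\<bar>d $ q\<bar>)^2) = (norm d)^2"
    unfolding power2_norm_eq_inner by (simp add: inner_vec_def power2_eq_square)
  finally show ?thesis by (simp add: mult.commute)
qed

lemma variance_le:
  fixes v :: "'j::finite \<Rightarrow> real^'n"
  assumes "\<forall>j. l j \<ge> 0" "sum l UNIV = 1" "x = (\<Sum>j\<in>UNIV. l j *\<^sub>R v j)"
  shows "(\<Sum>j\<in>UNIV. l j * (norm (v j - x))^2) \<le> (\<Sum>j\<in>UNIV. l j * (norm (v j - y))^2)"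
proof -
  have z: "(\<Sum>j\<in>UNIV. l j *\<^sub>R (v j - x)) = 0"
    using assms(2,3) by (simp add: scaleR_diff_right sum_subtractf flip: scaleR_sum_left)
  have e: "(norm (v j - y))^2 = (norm (v j - x))^2 + 2 * ((v j - x) \<bullet> (x - y)) + (norm (x - y))^2" for j
    unfolding power2_norm_eq_inner by (simp add: algebra_simps inner_diff_left inner_diff_right inner_commute)
  have "(\<Sum>j\<in>UNIV. l j * ((v j - x) \<bullet> (x - y))) = (\<Sum>j\<in>UNIV. l j *\<^sub>R (v j - x)) \<bullet> (x - y)"
    by (simp add: inner_sum_left)
  also have "\<dots> = 0" using z by simp
  finally have m: "(\<Sum>j\<in>UNIV. l j * ((v j - x) \<bullet> (x - y))) = 0" .
  have "(\<Sum>j\<in>UNIV. l j * (norm (v j - y))^2) = (\<Sum>j\<in>UNIV. l j * (norm (v j - x))^2)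
      + 2 * (\<Sum>j\<in>UNIV. l j * ((v j - x) \<bullet> (x - y))) + (\<Sum>j\<in>UNIV. l j) * (norm (x - y))^2"
    unfolding e distrib_left sum.distrib by (simp add: sum_distrib_left sum_distrib_right mult.left_commute)
  then show ?thesis using m assms(2) by simp
qed

lemma interp_bound:
  fixes g :: "real^'n \<Rightarrow> real"
  assumes nsd: "is_nsimplex_data x0 X" and w: "C2_witness (simplex_of x0 X) g D D2"
    and bnd: "\<forall>q r. \<forall>\<xi>\<in>simplex_of x0 X. \<bar>D2 q r \<xi>\<bar> \<le> B"
    and l: "\<forall>j. l j \<ge> 0" "sum l UNIV = 1" "x = (\<Sum>j\<in>UNIV. l j *\<^sub>R vert x0 X j)"
    and xS: "x \<in> simplex_of x0 X"
  shows "\<bar>g x - (\<Sum>j\<in>UNIV. l j * g (vert x0 X j))\<bar> \<le> B * (\<Sum>j\<in>UNIV. l j * c_coef x0 X j)"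
proof -
  let ?S = "simplex_of x0 X"
  let ?v = "vert x0 X"
  let ?n = "real CARD('n)"
  have cvx: "convex ?S" unfolding simplex_of_def by (rule convex_convex_hull)
  have vS: "?v j \<in> ?S" for j
    unfolding simplex_of_def range_vert[symmetric] by (rule hull_inc) simp
  obtain q0 :: 'n where True by simp
  have B0: "0 \<le> B" using bnd xS by (meson abs_ge_zero order_trans)
  define R where "R j = g (?v j) - g x - (\<Sum>q\<in>UNIV. D q x * (?v j - x)$q)" for j
  have hR: "\<bar>R j\<bar> \<le> B/2 * ?n * (norm (?v j - x))^2" for j
  proof -
    have "\<bar>R j\<bar> \<le> B/2 * (\<Sum>q\<in>UNIV. \<bar>(?v j - x)$q\<bar>)^2"
      unfolding R_def by (rule c2_taylor[OF cvx w bnd xS vS])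
    also have "\<dots> \<le> B/2 * (?n * (norm (?v j - x))^2)"
      by (rule mult_left_mono[OF l1_sq_le]) (use B0 in simp)
    finally show ?thesis by (simp add: mult.assoc)
  qed
  have z: "(\<Sum>j\<in>UNIV. l j *\<^sub>R (?v j - x)) = 0"
    using l(2,3) by (simp add: scaleR_diff_right sum_subtractf flip: scaleR_sum_left)
  have lin: "(\<Sum>j\<in>UNIV. l j * (\<Sum>q\<in>UNIV. D q x * (?v j - x)$q)) = 0"
  proof -
    have "(\<Sum>j\<in>UNIV. l j * (\<Sum>q\<in>UNIV. D q x * (?v j - x)$q))
        = (\<Sum>q\<in>UNIV. D q x * (\<Sum>j\<in>UNIV. l j * (?v j - x)$q))"
      unfolding sum_distrib_left by (subst sum.swap) (simp add: mult.left_commute)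
    also have "\<dots> = (\<Sum>q\<in>UNIV. D q x * (\<Sum>j\<in>UNIV. l j *\<^sub>R (?v j - x))$q)"
      by (simp add: sum_component)
    also have "\<dots> = 0" using z by simp
    finally show ?thesis .
  qed
  have eq: "(\<Sum>j\<in>UNIV. l j * g (?v j)) - g x = (\<Sum>j\<in>UNIV. l j * R j)"
  proof -
    have "(\<Sum>j\<in>UNIV. l j * R j) = (\<Sum>j\<in>UNIV. l j * g (?v j)) - (\<Sum>j\<in>UNIV. l j) * g x
       - (\<Sum>j\<in>UNIV. l j * (\<Sum>q\<in>UNIV. D q x * (?v j - x)$q))"
      unfolding R_def right_diff_distrib sum_subtractf sum_distrib_right[symmetric] ..
    then show ?thesis using lin l(2) by simp
  qed
  have "\<bar>g x - (\<Sum>j\<in>UNIV. l j * g (?v j))\<bar> = \<bar>\<Sum>j\<in>UNIV. l j * R j\<bar>"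
    using eq by (simp add: abs_minus_commute)
  also have "\<dots> \<le> (\<Sum>j\<in>UNIV. l j * \<bar>R j\<bar>)"
    using l(1) by (rule_tac order_trans[OF sum_abs]) (simp add: abs_mult)
  also have "\<dots> \<le> (\<Sum>j\<in>UNIV. l j * (B/2 * ?n * (norm (?v j - x))^2))"
    using l(1) hR by (intro sum_mono mult_left_mono) auto
  also have "\<dots> = B/2 * ?n * (\<Sum>j\<in>UNIV. l j * (norm (?v j - x))^2)"
    by (simp add: sum_distrib_left mult.left_commute)
  also have "\<dots> \<le> B/2 * ?n * (\<Sum>j\<in>UNIV. l j * (norm (?v j - x0))^2)"
    by (rule mult_left_mono[OF variance_le[OF l]]) (use B0 in simp)
  also have "\<dots> = B * (\<Sum>j\<in>UNIV. l j * (?n / 2 * (norm (?v j - x0))^2))"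
    by (simp add: sum_distrib_left sum_divide_distrib[symmetric] algebra_simps)
  also have "\<dots> \<le> B * (\<Sum>j\<in>UNIV. l j * c_coef x0 X j)"
    using l(1) B0 c_coef_ge by (intro mult_left_mono sum_mono) auto
  finally show ?thesis .
qed

lemma ind_inf_bdd: "bdd_above ((\<lambda>x. infnorm (A *v x)) ` {x::real^'c. infnorm x \<le> 1})"
proof -
  have bl: "bounded_linear ((*v) A)" by simp
  obtain K where K: "\<And>x. norm (A *v x) \<le> norm x * K" "K > 0"
    using bounded_linear.pos_bounded[OF bl] by blast
  have "infnorm (A *v x) \<le> sqrt DIM(real^'c) * K" if "infnorm x \<le> 1" for x :: "real^'c"
  proof -
    have "infnorm (A *v x) \<le> norm x * K" using infnorm_le_norm K(1) order_trans by blast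
    also have "\<dots> \<le> (sqrt DIM(real^'c) * infnorm x) * K"
      using norm_le_infnorm[of x] K(2) by (intro mult_right_mono) simp_all
    also have "\<dots> \<le> sqrt DIM(real^'c) * K"
      using that K(2) infnorm_pos_le[of x] by (simp add: mult_left_le)
    finally show ?thesis .
  qed
  then show ?thesis by (intro bdd_aboveI2) auto
qed

lemma ind_inf_nonneg: "0 \<le> ind_inf_norm (A :: real^'c^'r)"
proof -
  have "infnorm (A *v 0) \<le> ind_inf_norm A"
    unfolding ind_inf_norm_def by (rule cSUP_upper) (simp_all add: ind_inf_bdd infnorm_0)
  then show ?thesis by (simp add: infnorm_0)
qed

lemma ind_inf_bound: "infnorm (A *v v) \<le> ind_inf_norm (A :: real^'c^'r) * infnorm v"
proof (cases "v = 0")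
  case True then show ?thesis by (simp add: infnorm_0)
next
  case False
  then have p: "infnorm v > 0" by (simp add: infnorm_pos_lt)
  define u where "u = (1 / infnorm v) *\<^sub>R v"
  have iu: "infnorm u = 1" unfolding u_def infnorm_mul using p by simp
  have "infnorm (A *v u) \<le> ind_inf_norm A"
    unfolding ind_inf_norm_def by (rule cSUP_upper) (use iu in \<open>simp_all add: ind_inf_bdd\<close>)
  moreover have "A *v u = (1 / infnorm v) *\<^sub>R (A *v v)"
    unfolding u_def by (rule linear.scaleR[OF bounded_linear.linear[OF matrix_vector_mul_bounded_linear]])
  ultimately have "infnorm (A *v v) / infnorm v \<le> ind_inf_norm A"
    using p by (simp add: infnorm_mul)
  then show ?thesis using p by (simp add: divide_le_eq)
qed

lemma G_term:
  fixes Gm :: "real^'m^'n" and w :: "real^'n"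
  shows "(norm (transpose Gm *v w))^2 \<le> ind_inf_norm (Gm ** transpose Gm) * (\<Sum>k\<in>UNIV. \<bar>w$k\<bar>)^2"
proof -
  let ?A = "Gm ** transpose Gm"
  let ?s = "\<Sum>k\<in>UNIV. \<bar>w$k\<bar>"
  have "(norm (transpose Gm *v w))^2 = (w v* Gm) \<bullet> (transpose Gm *v w)"
    unfolding power2_norm_eq_inner by simp
  also have "\<dots> = w \<bullet> (?A *v w)"
    by (simp only: dot_lmul_matrix matrix_vector_mul_assoc)
  also have "\<dots> \<le> (\<Sum>k\<in>UNIV. \<bar>w$k\<bar> * infnorm (?A *v w))"
    unfolding inner_vec_def
    by (rule order_trans[OF sum_abs[THEN order_trans[OF abs_ge_self]]])
       (auto simp: abs_mult intro!: sum_mono mult_left_mono component_le_infnorm_cart)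
  also have "\<dots> = ?s * infnorm (?A *v w)" by (simp add: sum_distrib_right)
  also have "\<dots> \<le> ?s * (ind_inf_norm ?A * infnorm w)"
    by (rule mult_left_mono[OF ind_inf_bound]) (simp add: sum_nonneg)
  also have "\<dots> \<le> ?s * (ind_inf_norm ?A * ?s)"
    using infnorm_le_norm norm_le_l1_cart ind_inf_nonneg
    by (intro mult_left_mono) (auto simp: sum_nonneg intro: order_trans)
  also have "\<dots> = ind_inf_norm ?A * ?s^2" by (simp add: power2_eq_square)
  finally show ?thesis .
qed

theorem theorem1:
  fixes f :: "real^'n \<Rightarrow> real^'n"
    and G :: "real^'n \<Rightarrow> real^'m^'n"
    and h :: "real^'n \<Rightarrow> real^'q"
    and \<X> \<Omega> :: "(real^'n) set"
    and \<U> :: "(real^'m) set"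
    and M :: nat
    and x0 :: "nat \<Rightarrow> real^'n"
    and X :: "nat \<Rightarrow> 'n \<Rightarrow> real^'n"
    and \<beta> \<beta>t \<beta>b :: "nat \<Rightarrow> real"
  assumes "region \<X>" and "region \<U>" and "region \<Omega>" and "\<Omega> \<subseteq> \<X>"
    and "f 0 = 0" and "h 0 = 0" and "gbar G 0 = 0"
    and "triangulation \<Omega> M x0 X"
    and "continuous_on \<Omega> f" and "continuous_on \<Omega> G" and "continuous_on \<Omega> h"
    and "\<forall>i<M. \<forall>p. C2_on (simplex_of (x0 i) (X i)) (\<lambda>x. f x $ p)"
    and "\<forall>i<M. \<forall>a b. C2_on (simplex_of (x0 i) (X i)) (\<lambda>x. G x $ a $ b)"
    and "\<forall>i<M. \<forall>p. C2_on (simplex_of (x0 i) (X i)) (\<lambda>x. h x $ p)"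
    and "\<forall>i<M. \<forall>p. C2_bounded (simplex_of (x0 i) (X i)) (\<lambda>x. f x $ p) (\<beta> i)"
    and "\<forall>i<M. C2_bounded (simplex_of (x0 i) (X i)) (\<lambda>x. h x \<bullet> h x) (\<beta>t i)"
    and "\<forall>i<M. C2_bounded (simplex_of (x0 i) (X i)) (gbar G) (\<beta>b i)"
  shows "(\<exists>V L b1 \<gamma>. conds f G h M x0 X \<beta> \<beta>t \<beta>b V L b1 \<gamma>)
       \<and> (\<forall>V L b1 \<gamma>. conds f G h M x0 X \<beta> \<beta>t \<beta>b V L b1 \<gamma> \<and> b1 > 0 \<longrightarrow>
            (\<forall>x\<in>interior \<Omega>. \<forall>i<M. x \<in> simplex_of (x0 i) (X i) \<longrightarrow>
               cpa_grad V (x0 i) (X i) \<bullet> f x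
               + 1 / (2 * \<gamma>) * (norm (transpose (G x) *v cpa_grad V (x0 i) (X i)))\<^sup>2
               + 1/2 * (norm (h x))\<^sup>2 \<le> 0))"
proof (intro conjI allI impI ballI)
  have tri: "triangulation \<Omega> M x0 X" by fact
  define Z :: "real^'n \<Rightarrow> real" where "Z = (\<lambda>_. 0)"
  define L0 :: "nat \<Rightarrow> real^'n" where "L0 = (\<lambda>_. 0)"
  define Hf where "Hf i j = H_val f G h (\<beta> i) (\<beta>t i) (\<beta>b i) Z (L0 i) 1 (x0 i) (X i) j" for i j
  define b0 where "b0 = - (\<Sum>i<M. \<Sum>j\<in>UNIV. \<bar>Hf i j\<bar>)"
  have cz: "cpa_grad Z x y = 0" for x y unfolding cpa_grad_def Z_def
    by (simp add: vec_eq_iff matrix_vector_mult_def)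
  have "Hf i j \<le> - b0" if "i < M" for i j
  proof -
    have "Hf i j \<le> \<bar>Hf i j\<bar>" by simp
    also have "\<dots> \<le> (\<Sum>j\<in>UNIV. \<bar>Hf i j\<bar>)" by (rule member_le_sum) auto
    also have "\<dots> \<le> (\<Sum>i<M. \<Sum>j\<in>UNIV. \<bar>Hf i j\<bar>)"
      using that by (intro member_le_sum[where f="\<lambda>i. \<Sum>j\<in>UNIV. \<bar>Hf i j\<bar>"]) (auto intro: sum_nonneg)
    finally show ?thesis unfolding b0_def by simp
  qed
  then have "conds f G h M x0 X \<beta> \<beta>t \<beta>b Z L0 b0 1"
    unfolding conds_def Hf_def using cz by (auto simp: Z_def L0_def)
  then show "\<exists>V L b1 \<gamma>. conds f G h M x0 X \<beta> \<beta>t \<beta>b V L b1 \<gamma>" by blast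
next
  fix V L b1 \<gamma> x i
  assume cb: "conds f G h M x0 X \<beta> \<beta>t \<beta>b V L b1 \<gamma> \<and> 0 < b1"
    and "x \<in> interior \<Omega>" and i: "i < M" and xS: "x \<in> simplex_of (x0 i) (X i)"
  have tri: "triangulation \<Omega> M x0 X" by fact
  let ?S = "simplex_of (x0 i) (X i)"
  let ?v = "vert (x0 i) (X i)"
  define w where "w = cpa_grad V (x0 i) (X i)"
  define s where "s = one_dot (L i)"
  have nsd: "is_nsimplex_data (x0 i) (X i)" using tri i unfolding triangulation_def by auto
  have g0: "\<gamma> > 0" and wl: "\<And>k. \<bar>w $ k\<bar> \<le> L i $ k"
    and Hb: "\<And>j. ?v j \<noteq> 0 \<Longrightarrow> H_val f G h (\<beta> i) (\<beta>t i) (\<beta>b i) V (L i) \<gamma> (x0 i) (X i) j \<le> - b1"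
    and b1: "b1 > 0"
    using cb i unfolding conds_def w_def by auto
  have sw: "(\<Sum>k\<in>UNIV. \<bar>w $ k\<bar>) \<le> s" unfolding s_def one_dot_def by (rule sum_mono) (rule wl)
  have s0: "0 \<le> s" using sw by (meson order_trans sum_nonneg abs_ge_zero)
  obtain l where l: "\<forall>j. l j \<ge> 0" "sum l UNIV = 1" "x = (\<Sum>j\<in>UNIV. l j *\<^sub>R ?v j)"
    using simplex_coords[OF nsd xS] by blast
  define C where "C = (\<Sum>j\<in>UNIV. l j * c_coef (x0 i) (X i) j)"
  have ferr: "\<bar>f x $ p - (\<Sum>j\<in>UNIV. l j * f (?v j) $ p)\<bar> \<le> \<beta> i * C" for p
  proof -
    obtain D D2 where w1: "C2_witness ?S (\<lambda>x. f x $ p) D D2" and w2: "\<forall>q r. \<forall>\<xi>\<in>?S. \<bar>D2 q r \<xi>\<bar> \<le> \<beta> i"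
      using assms(15) i unfolding C2_bounded_def by blast
    from interp_bound[OF nsd w1 w2 l xS] show ?thesis by (simp add: C_def)
  qed
  have herr: "\<bar>h x \<bullet> h x - (\<Sum>j\<in>UNIV. l j * (h (?v j) \<bullet> h (?v j)))\<bar> \<le> \<beta>t i * C"
  proof -
    obtain D D2 where w1: "C2_witness ?S (\<lambda>x. h x \<bullet> h x) D D2" and w2: "\<forall>q r. \<forall>\<xi>\<in>?S. \<bar>D2 q r \<xi>\<bar> \<le> \<beta>t i"
      using assms(16) i unfolding C2_bounded_def by blast
    from interp_bound[OF nsd w1 w2 l xS] show ?thesis by (simp add: C_def)
  qed
  have gerr: "\<bar>gbar G x - (\<Sum>j\<in>UNIV. l j * gbar G (?v j))\<bar> \<le> \<beta>b i * C"
  proof -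
    obtain D D2 where w1: "C2_witness ?S (gbar G) D D2" and w2: "\<forall>q r. \<forall>\<xi>\<in>?S. \<bar>D2 q r \<xi>\<bar> \<le> \<beta>b i"
      using assms(17) i unfolding C2_bounded_def by blast
    from interp_bound[OF nsd w1 w2 l xS] show ?thesis by (simp add: C_def)
  qed
  define A where "A = (\<Sum>j\<in>UNIV. l j * (f (?v j) \<bullet> w))"
  define Hh where "Hh = (\<Sum>j\<in>UNIV. l j * (norm (h (?v j)))^2)"
  define Gb where "Gb = (\<Sum>j\<in>UNIV. l j * gbar G (?v j))"
  have fterm: "w \<bullet> f x \<le> A + s * \<beta> i * C"
  proof -
    have "w \<bullet> f x = (\<Sum>p\<in>UNIV. w $ p * (\<Sum>j\<in>UNIV. l j * f (?v j) $ p))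
        + (\<Sum>p\<in>UNIV. w $ p * (f x $ p - (\<Sum>j\<in>UNIV. l j * f (?v j) $ p)))"
      unfolding inner_vec_def by (simp add: algebra_simps sum.distrib[symmetric])
    also have "(\<Sum>p\<in>UNIV. w $ p * (\<Sum>j\<in>UNIV. l j * f (?v j) $ p)) = A"
      unfolding A_def inner_vec_def sum_distrib_left
      by (subst sum.swap) (simp add: algebra_simps)
    also have "(\<Sum>p\<in>UNIV. w $ p * (f x $ p - (\<Sum>j\<in>UNIV. l j * f (?v j) $ p)))
        \<le> (\<Sum>p\<in>UNIV. L i $ p * (\<beta> i * C))"
    proof (rule sum_mono)
      fix p
      have "w $ p * (f x $ p - (\<Sum>j\<in>UNIV. l j * f (?v j) $ p))
          \<le> \<bar>w $ p\<bar> * \<bar>f x $ p - (\<Sum>j\<in>UNIV. l j * f (?v j) $ p)\<bar>"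
        by (simp add: abs_mult[symmetric])
      also have "\<dots> \<le> L i $ p * (\<beta> i * C)"
        by (rule mult_mono[OF wl ferr]) (auto intro: order_trans[OF abs_ge_zero wl])
      finally show "w $ p * (f x $ p - (\<Sum>j\<in>UNIV. l j * f (?v j) $ p)) \<le> L i $ p * (\<beta> i * C)" .
    qed
    also have "(\<Sum>p\<in>UNIV. L i $ p * (\<beta> i * C)) = s * \<beta> i * C"
      unfolding s_def one_dot_def by (simp add: sum_distrib_right mult.assoc)
    finally show ?thesis by simp
  qed
  have hterm: "(norm (h x))^2 \<le> Hh + \<beta>t i * C"
    using herr unfolding Hh_def power2_norm_eq_inner by (simp add: abs_le_iff)
  have gterm: "(norm (transpose (G x) *v w))^2 \<le> (Gb + \<beta>b i * C) * s^2"
  proof -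
    have "(norm (transpose (G x) *v w))^2 \<le> gbar G x * (\<Sum>k\<in>UNIV. \<bar>w$k\<bar>)^2"
      unfolding gbar_def by (rule G_term)
    also have "\<dots> \<le> gbar G x * s^2"
      by (intro mult_left_mono power_mono sw) (auto simp: gbar_def ind_inf_nonneg sum_nonneg)
    also have "\<dots> \<le> (Gb + \<beta>b i * C) * s^2"
      using gerr unfolding Gb_def by (intro mult_right_mono) (auto simp: abs_le_iff)
    finally show ?thesis .
  qed
  define Hj where "Hj j = H_val f G h (\<beta> i) (\<beta>t i) (\<beta>b i) V (L i) \<gamma> (x0 i) (X i) j" for j
  have Hj_le: "Hj j \<le> 0" for j
  proof (cases "?v j = 0")
    case False then show ?thesis using Hb b1 unfolding Hj_def by force
  next
    case True
    have vS: "?v j \<in> ?S"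
      unfolding simplex_of_def range_vert[symmetric] by (rule hull_inc) simp
    then have "x0 i = 0" using tri i True unfolding triangulation_def by auto
    then have "c_coef (x0 i) (X i) j = 0" using True unfolding c_coef_def by simp
    then show ?thesis unfolding Hj_def H_val_def using True assms(5,6,7) by (simp add: w_def s_def)
  qed
  have lin: "l j * Hj j = l j * (f (?v j) \<bullet> w) + 1/2 * (l j * (norm (h (?v j)))^2)
      + (s * \<beta> i + 1/2 * \<beta>t i) * (l j * c_coef (x0 i) (X i) j)
      + 1 / (2 * \<gamma>) * s^2 * (l j * gbar G (?v j))
      + 1 / (2 * \<gamma>) * s^2 * \<beta>b i * (l j * c_coef (x0 i) (X i) j)" for j
    unfolding Hj_def H_val_def w_def[symmetric] s_def[symmetric] by (simp add: algebra_simps)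
  have sumH: "(\<Sum>j\<in>UNIV. l j * Hj j) = A + 1/2 * Hh + (s * \<beta> i + 1/2 * \<beta>t i) * C
      + 1 / (2 * \<gamma>) * s^2 * Gb + 1 / (2 * \<gamma>) * s^2 * \<beta>b i * C"
    unfolding lin sum.distrib A_def Hh_def C_def Gb_def sum_distrib_left[symmetric] ..
  have "(\<Sum>j\<in>UNIV. l j * Hj j) \<le> 0"
    using l(1) Hj_le by (intro sum_nonpos) (simp add: mult_nonneg_nonpos)
  moreover have "w \<bullet> f x + 1 / (2 * \<gamma>) * (norm (transpose (G x) *v w))^2 + 1/2 * (norm (h x))^2
      \<le> (\<Sum>j\<in>UNIV. l j * Hj j)"
  proof -
    have "1 / (2 * \<gamma>) * (norm (transpose (G x) *v w))^2 \<le> 1 / (2 * \<gamma>) * ((Gb + \<beta>b i * C) * s^2)"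
      using gterm g0 by (intro mult_left_mono) auto
    then show ?thesis unfolding sumH using fterm hterm by (simp add: algebra_simps)
  qed
  ultimately show "cpa_grad V (x0 i) (X i) \<bullet> f x
               + 1 / (2 * \<gamma>) * (norm (transpose (G x) *v cpa_grad V (x0 i) (X i)))\<^sup>2
               + 1/2 * (norm (h x))\<^sup>2 \<le> 0" unfolding w_def by linarith
qed

end
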